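(* The sets $\{123,2413\}$ and $\{132,2314\}$ are forest-Wilf equivalent, and the sets $\{123,3142\}$ and $\{132,3124\}$ are forest-Wilf equivalent.
   Context: A rooted labeled forest on $[n]$ is an unordered forest on $n$ vertices, each component with a distinguished root, with distinct labels from $[n]$. For a permutation (pattern) $\pi$ of $[k]$, an instance of $\pi$ is a sequence of vertices $v_1,\dots,v_k$ with $v_i$ a strict ancestor of $v_{i+1}$ whose labels are in the same relative order as $\pi$; a forest avoids a set of patterns if it has no instance of any of them. Two sets $S,S'$ are forest-Wilf equivalent if for every $n\ge0$ the number of rooted labeled forests on $[n]$ avoiding $S$ equals the number avoiding $S'$. *)

theory Defs
  imports Main
begin

text \<open>A rooted labeled forest on [n] is encoded by its parent map: vertices are
identified with their labels 1..n; par v = None means v is a root, par v = Some u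
means u is the parent of v.\<close>

definition parent_rel :: "(nat \<Rightarrow> nat option) \<Rightarrow> (nat \<times> nat) set" where
  "parent_rel par = {(u, v). par v = Some u}"

definition strict_anc :: "(nat \<Rightarrow> nat option) \<Rightarrow> (nat \<times> nat) set" where
  "strict_anc par = (parent_rel par)\<^sup>+"

definition is_forest :: "nat \<Rightarrow> (nat \<Rightarrow> nat option) \<Rightarrow> bool" where
  "is_forest n par \<longleftrightarrow>
     (\<forall>v. v \<notin> {1..n} \<longrightarrow> par v = None) \<and>
     (\<forall>v\<in>{1..n}. \<forall>u. par v = Some u \<longrightarrow> u \<in> {1..n}) \<and>
     (\<forall>v. (v, v) \<notin> strict_anc par)"

text \<open>Patterns are permutations of [k] written as lists, e.g. 2413 = [2,4,1,3].\<close>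
definition is_instance :: "(nat \<Rightarrow> nat option) \<Rightarrow> nat list \<Rightarrow> nat list \<Rightarrow> bool" where
  "is_instance par pat vs \<longleftrightarrow>
     length vs = length pat \<and>
     (\<forall>i. Suc i < length vs \<longrightarrow> (vs ! i, vs ! Suc i) \<in> strict_anc par) \<and>
     (\<forall>i<length vs. \<forall>j<length vs. vs ! i < vs ! j \<longleftrightarrow> pat ! i < pat ! j)"

definition avoids :: "(nat \<Rightarrow> nat option) \<Rightarrow> nat list set \<Rightarrow> bool" where
  "avoids par S \<longleftrightarrow> (\<forall>pat\<in>S. \<not> (\<exists>vs. is_instance par pat vs))"

definition num_avoiding :: "nat \<Rightarrow> nat list set \<Rightarrow> nat" where
  "num_avoiding n S = card {par. is_forest n par \<and> avoids par S}"

definition forest_wilf_equiv :: "nat list set \<Rightarrow> nat list set \<Rightarrow> bool" where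
  "forest_wilf_equiv S S' \<longleftrightarrow> (\<forall>n. num_avoiding n S = num_avoiding n S')"

end

theory Submission
  imports Defs
begin


section \<open>Reversal of a finite set of naturals\<close>

definition rev_set :: "nat set \<Rightarrow> nat \<Rightarrow> nat" where
  "rev_set K x = (let xs = sorted_list_of_set K in
     xs ! (length xs - Suc (THE i. i < length xs \<and> xs ! i = x)))"

lemma rev_set_facts:
  assumes K: "finite K" and x: "x \<in> K"
  defines "xs \<equiv> sorted_list_of_set K"
  shows "\<exists>i. i < length xs \<and> xs ! i = x \<and> rev_set K x = xs ! (length xs - Suc i)"
proof -
  have st: "sorted_wrt (<) xs" unfolding xs_def by simp
  have d: "distinct xs" unfolding xs_def by simp
  have s: "set xs = K" unfolding xs_def using K by simp
  obtain i where i: "i < length xs" "xs ! i = x" using x s by (metis in_set_conv_nth)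
  have u: "(THE i. i < length xs \<and> xs ! i = x) = i"
    using i d by (auto intro!: the_equality simp: nth_eq_iff_index_eq)
  show ?thesis using i u unfolding rev_set_def xs_def[symmetric] Let_def by auto
qed

lemma rev_set_in: "finite K \<Longrightarrow> x \<in> K \<Longrightarrow> rev_set K x \<in> K"
proof -
  assume K: "finite K" and x: "x \<in> K"
  obtain i where i: "i < length (sorted_list_of_set K)"
    "rev_set K x = sorted_list_of_set K ! (length (sorted_list_of_set K) - Suc i)"
    using rev_set_facts[OF K x] by blast
  then have "rev_set K x \<in> set (sorted_list_of_set K)" by simp
  then show ?thesis using K by simp
qed

lemma sorted_nth_less_iff:
  assumes "sorted_wrt (<) (xs::nat list)" "i < length xs" "j < length xs"
  shows "xs ! i < xs ! j \<longleftrightarrow> i < j"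
proof
  assume "i < j" then show "xs ! i < xs ! j" using assms sorted_wrt_nth_less by blast
next
  assume a: "xs ! i < xs ! j"
  show "i < j"
  proof (rule ccontr)
    assume "\<not> i < j"
    then have "j < i \<or> j = i" by auto
    then show False
    proof
      assume "j < i" then have "xs ! j < xs ! i" using assms sorted_wrt_nth_less by blast
      then show False using a by simp
    next
      assume "j = i" then show False using a by simp
    qed
  qed
qed

lemma rev_set_inv: "finite K \<Longrightarrow> x \<in> K \<Longrightarrow> rev_set K (rev_set K x) = x"
proof -
  assume K: "finite K" and x: "x \<in> K"
  define xs where "xs = sorted_list_of_set K"
  have d: "distinct xs" unfolding xs_def by simp
  obtain i where i: "i < length xs" "xs ! i = x" "rev_set K x = xs ! (length xs - Suc i)"
    using rev_set_facts[OF K x] unfolding xs_def by blast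
  have y: "rev_set K x \<in> K" using rev_set_in K x by blast
  obtain j where j: "j < length xs" "xs ! j = rev_set K x" "rev_set K (rev_set K x) = xs ! (length xs - Suc j)"
    using rev_set_facts[OF K y] unfolding xs_def by blast
  have "j = length xs - Suc i" using j(1,2) i(1,3) d by (simp add: nth_eq_iff_index_eq)
  then have "length xs - Suc j = i" using i(1) by simp
  then show ?thesis using j(3) i(2) by simp
qed

lemma rev_set_anti:
  assumes K: "finite K" and x: "x \<in> K" and y: "y \<in> K" and xy: "x < y"
  shows "rev_set K y < rev_set K x"
proof -
  define xs where "xs = sorted_list_of_set K"
  have st: "sorted_wrt (<) xs" unfolding xs_def by simp
  obtain i where i: "i < length xs" "xs ! i = x" "rev_set K x = xs ! (length xs - Suc i)"
    using rev_set_facts[OF K x] unfolding xs_def by blast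
  obtain j where j: "j < length xs" "xs ! j = y" "rev_set K y = xs ! (length xs - Suc j)"
    using rev_set_facts[OF K y] unfolding xs_def by blast
  have "i < j" using sorted_nth_less_iff[OF st i(1) j(1)] i(2) j(2) xy by simp
  then have "length xs - Suc j < length xs - Suc i" using j(1) by simp
  then have "xs ! (length xs - Suc j) < xs ! (length xs - Suc i)"
    using sorted_wrt_nth_less[OF st] i(1) by simp
  then show ?thesis using i(3) j(3) by simp
qed

lemma parent_anc: "par v = Some u \<Longrightarrow> (u,v) \<in> strict_anc par"
  by (auto simp: strict_anc_def parent_rel_def)

lemma anc_trans: "(u,v) \<in> strict_anc par \<Longrightarrow> (v,w) \<in> strict_anc par \<Longrightarrow> (u,w) \<in> strict_anc par"
  unfolding strict_anc_def by (rule trancl_trans)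

lemma anc_cases: "(u,v) \<in> strict_anc par \<Longrightarrow> \<exists>p. par v = Some p \<and> (p = u \<or> (u,p) \<in> strict_anc par)"
  unfolding strict_anc_def by (erule tranclE) (auto simp: parent_rel_def)

lemma anc_total_aux:
  "(x,v) \<in> (parent_rel par)\<^sup>+ \<Longrightarrow> \<forall>y. (y,v) \<in> (parent_rel par)\<^sup>+ \<longrightarrow>
     x = y \<or> (x,y) \<in> (parent_rel par)\<^sup>+ \<or> (y,x) \<in> (parent_rel par)\<^sup>+"
proof (induction rule: trancl_induct)
  case (base v)
  show ?case
  proof (intro allI impI)
    fix y assume "(y,v) \<in> (parent_rel par)\<^sup>+"
    then show "x = y \<or> (x,y) \<in> (parent_rel par)\<^sup>+ \<or> (y,x) \<in> (parent_rel par)\<^sup>+"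
    proof (cases rule: tranclE)
      case base
      then show ?thesis using \<open>(x,v) \<in> parent_rel par\<close> by (simp add: parent_rel_def)
    next
      case (step c)
      then have "c = x" using \<open>(x,v) \<in> parent_rel par\<close> by (simp add: parent_rel_def)
      then show ?thesis using step(1) by simp
    qed
  qed
next
  case (step u v)
  show ?case
  proof (intro allI impI)
    fix y assume "(y,v) \<in> (parent_rel par)\<^sup>+"
    then show "x = y \<or> (x,y) \<in> (parent_rel par)\<^sup>+ \<or> (y,x) \<in> (parent_rel par)\<^sup>+"
    proof (cases rule: tranclE)
      case base
      then have "y = u" using step(2) by (simp add: parent_rel_def)
      then show ?thesis using step(1) by simp
    next
      case (step c)
      then have "c = u" using \<open>(u,v) \<in> parent_rel par\<close> by (simp add: parent_rel_def)
      then show ?thesis using step(1) \<open>\<forall>y. _\<close> by blast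
    qed
  qed
qed

lemma anc_total: "(x,v) \<in> strict_anc par \<Longrightarrow> (y,v) \<in> strict_anc par \<Longrightarrow>
   x = y \<or> (x,y) \<in> strict_anc par \<or> (y,x) \<in> strict_anc par"
  unfolding strict_anc_def using anc_total_aux by blast


definition nonM :: "(nat \<Rightarrow> nat option) \<Rightarrow> nat \<Rightarrow> bool" where
  "nonM par v \<longleftrightarrow> (\<exists>u. (u,v) \<in> strict_anc par \<and> u < v)"

definition mn :: "(nat \<Rightarrow> nat option) \<Rightarrow> nat \<Rightarrow> nat" where
  "mn par v = Min {u. (u,v) \<in> strict_anc par}"

definition lvl :: "(nat \<Rightarrow> nat option) \<Rightarrow> nat \<Rightarrow> nat" where
  "lvl par v = Max {m. \<not> nonM par m \<and> (m,v) \<in> strict_anc par \<and> m < v}"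

definition cls :: "(nat \<Rightarrow> nat option) \<Rightarrow> (nat \<Rightarrow> nat) \<Rightarrow> nat \<Rightarrow> nat set" where
  "cls par c v = {w. nonM par w \<and> c w = c v}"

definition piC :: "(nat \<Rightarrow> nat option) \<Rightarrow> (nat \<Rightarrow> nat) \<Rightarrow> nat \<Rightarrow> nat" where
  "piC par c v = (if nonM par v then rev_set (cls par c v) v else v)"

definition relab :: "(nat \<Rightarrow> nat) \<Rightarrow> (nat \<Rightarrow> nat option) \<Rightarrow> (nat \<Rightarrow> nat option)" where
  "relab \<pi> par = (\<lambda>x. map_option \<pi> (par (\<pi> x)))"

lemma relab_anc_aux:
  assumes inv: "\<And>x. \<pi> (\<pi> x) = x"
  shows "(x,y) \<in> (parent_rel par)\<^sup>+ \<Longrightarrow> (\<pi> x, \<pi> y) \<in> (parent_rel (relab \<pi> par))\<^sup>+"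
proof (induction rule: trancl_induct)
  case (base y)
  then show ?case using inv by (auto simp: parent_rel_def relab_def)
next
  case (step y z)
  then have "(\<pi> y, \<pi> z) \<in> parent_rel (relab \<pi> par)" using inv by (auto simp: parent_rel_def relab_def)
  then show ?case using step(3) by (meson trancl.trancl_into_trancl)
qed

lemma relab_relab: assumes inv: "\<And>x. \<pi> (\<pi> x) = x" shows "relab \<pi> (relab \<pi> par) = par"
proof (rule ext)
  fix x
  show "relab \<pi> (relab \<pi> par) x = par x"
    by (cases "par x") (simp_all add: relab_def inv)
qed

lemma relab_anc:
  assumes inv: "\<And>x. \<pi> (\<pi> x) = x"
  shows "(x,y) \<in> strict_anc (relab \<pi> par) \<longleftrightarrow> (\<pi> x, \<pi> y) \<in> strict_anc par"
proof
  assume "(x,y) \<in> strict_anc (relab \<pi> par)"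
  then have "(\<pi> x, \<pi> y) \<in> (parent_rel (relab \<pi> (relab \<pi> par)))\<^sup>+"
    using relab_anc_aux[OF inv] unfolding strict_anc_def by blast
  then show "(\<pi> x, \<pi> y) \<in> strict_anc par" using relab_relab[OF inv] unfolding strict_anc_def by simp
next
  assume "(\<pi> x, \<pi> y) \<in> strict_anc par"
  then have "(\<pi> (\<pi> x), \<pi> (\<pi> y)) \<in> (parent_rel (relab \<pi> par))\<^sup>+"
    using relab_anc_aux[OF inv] unfolding strict_anc_def by blast
  then show "(x,y) \<in> strict_anc (relab \<pi> par)" using inv unfolding strict_anc_def by simp
qed

lemma relab_forest:
  assumes F: "is_forest n par" and inv: "\<And>x. \<pi> (\<pi> x) = x"
    and rng: "\<And>x. \<pi> x \<in> {1..n} \<longleftrightarrow> x \<in> {1..n}"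
  shows "is_forest n (relab \<pi> par)"
  unfolding is_forest_def
proof (intro conjI allI ballI impI)
  fix v assume "v \<notin> {1..n}"
  then have "\<pi> v \<notin> {1..n}" using rng by blast
  then have "par (\<pi> v) = None" using F unfolding is_forest_def by blast
  then show "relab \<pi> par v = None" by (simp add: relab_def)
next
  fix v u assume v: "v \<in> {1..n}" and "relab \<pi> par v = Some u"
  then obtain u' where u': "par (\<pi> v) = Some u'" "u = \<pi> u'" by (auto simp: relab_def)
  moreover have "\<pi> v \<in> {1..n}" using v rng by blast
  ultimately have "u' \<in> {1..n}" using F unfolding is_forest_def by blast
  then show "u \<in> {1..n}" using u'(2) rng by blast
next
  fix v 
  have "(\<pi> v, \<pi> v) \<notin> strict_anc par" using F unfolding is_forest_def by blast
  then show "(v,v) \<notin> strict_anc (relab \<pi> par)"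
    using relab_anc[OF inv] by blast
qed



locale frst =
  fixes n :: nat and par :: "nat \<Rightarrow> nat option"
  assumes F: "is_forest n par"
begin

lemma F_all: "(\<forall>v. v \<notin> {1..n} \<longrightarrow> par v = None) \<and>
     (\<forall>v\<in>{1..n}. \<forall>u. par v = Some u \<longrightarrow> u \<in> {1..n}) \<and>
     (\<forall>v. (v, v) \<notin> strict_anc par)"
  using F unfolding is_forest_def .

lemma F1: "v \<notin> {1..n} \<Longrightarrow> par v = None"
  using F_all by blast

lemma F2: "v \<in> {1..n} \<Longrightarrow> par v = Some u \<Longrightarrow> u \<in> {1..n}"
  using F_all by blast

lemma acyc: "(v,v) \<notin> strict_anc par"
  using F_all by blast

lemma asym: "(u,v) \<in> strict_anc par \<Longrightarrow> (v,u) \<notin> strict_anc par"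
  using acyc anc_trans by blast

lemma anc_neq: "(u,v) \<in> strict_anc par \<Longrightarrow> u \<noteq> v"
  using acyc by blast

lemma par_range: assumes "par v = Some u" shows "v \<in> {1..n}" "u \<in> {1..n}"
proof -
  show v: "v \<in> {1..n}"
  proof (rule ccontr)
    assume "v \<notin> {1..n}" then have "par v = None" by (rule F1)
    with assms show False by simp
  qed
  show "u \<in> {1..n}" using F2[OF v assms] .
qed

lemma anc_range: assumes "(u,v) \<in> strict_anc par" shows "u \<in> {1..n}" "v \<in> {1..n}"
proof -
  obtain w where "(u,w) \<in> parent_rel par"
    using assms unfolding strict_anc_def by (blast dest: tranclD)
  then have "par w = Some u" by (simp add: parent_rel_def)
  then show "u \<in> {1..n}" by (rule par_range)
  obtain p where "par v = Some p" using anc_cases[OF assms] by blast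
  then show "v \<in> {1..n}" by (rule par_range)
qed

lemma anc_fin: "finite {u. (u,v) \<in> strict_anc par}"
proof (rule finite_subset)
  show "{u. (u,v) \<in> strict_anc par} \<subseteq> {1..n}" using anc_range by blast
qed simp

lemma M_less: "\<not> nonM par w \<Longrightarrow> (u,w) \<in> strict_anc par \<Longrightarrow> w < u"
proof -
  assume a: "\<not> nonM par w" and b: "(u,w) \<in> strict_anc par"
  have "u \<noteq> w" using anc_neq[OF b] .
  moreover have "\<not> u < w" using a b unfolding nonM_def by blast
  ultimately show "w < u" by simp
qed

lemma nonM_range: "nonM par v \<Longrightarrow> v \<in> {1..n}"
  unfolding nonM_def using anc_range by blast

lemma mn_le: "(u,v) \<in> strict_anc par \<Longrightarrow> mn par v \<le> u"
  unfolding mn_def using anc_fin by (simp add: Min_le)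

lemma mn_anc: assumes "(u,v) \<in> strict_anc par" shows "(mn par v, v) \<in> strict_anc par"
proof -
  have "{u. (u,v) \<in> strict_anc par} \<noteq> {}" using assms by blast
  then have "Min {u. (u,v) \<in> strict_anc par} \<in> {u. (u,v) \<in> strict_anc par}"
    using anc_fin by (rule Min_in[rotated])
  then show ?thesis unfolding mn_def by simp
qed

lemma mn_less: assumes "nonM par v" shows "mn par v < v"
proof -
  obtain u where "(u,v) \<in> strict_anc par" "u < v" using assms unfolding nonM_def by blast
  then show ?thesis using mn_le by (meson le_less_trans)
qed

lemma mn_M: assumes "(u0,v) \<in> strict_anc par" shows "\<not> nonM par (mn par v)"
proof
  assume "nonM par (mn par v)"
  then obtain u where u: "(u, mn par v) \<in> strict_anc par" "u < mn par v" unfolding nonM_def by blast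
  have "(u,v) \<in> strict_anc par" using anc_trans[OF u(1) mn_anc[OF assms]] .
  then have "mn par v \<le> u" by (rule mn_le)
  then show False using u(2) by simp
qed

lemma nonM_anc: "nonM par v \<Longrightarrow> \<exists>u. (u,v) \<in> strict_anc par"
  unfolding nonM_def by blast

definition lvlset where "lvlset v = {m. \<not> nonM par m \<and> (m,v) \<in> strict_anc par \<and> m < v}"

lemma lvlset_fin: "finite (lvlset v)"
  by (rule finite_subset[OF _ anc_fin[of v]]) (auto simp: lvlset_def)

lemma lvl_eq: "lvl par v = Max (lvlset v)"
  by (simp add: lvl_def lvlset_def)

lemma mn_in_lvlset: assumes "nonM par v" shows "mn par v \<in> lvlset v"
proof -
  obtain u where u: "(u,v) \<in> strict_anc par" using nonM_anc[OF assms] by blast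
  show ?thesis unfolding lvlset_def using mn_M[OF u] mn_anc[OF u] mn_less[OF assms] by simp
qed

lemma lvl_in: assumes "nonM par v"
  shows "\<not> nonM par (lvl par v)" "(lvl par v, v) \<in> strict_anc par" "lvl par v < v"
proof -
  have "lvlset v \<noteq> {}" using mn_in_lvlset[OF assms] by blast
  then have "Max (lvlset v) \<in> lvlset v" using lvlset_fin by (rule Max_in[rotated])
  then show "\<not> nonM par (lvl par v)" "(lvl par v, v) \<in> strict_anc par" "lvl par v < v"
    unfolding lvl_eq lvlset_def by simp_all
qed

lemma lvl_max: "\<not> nonM par m \<Longrightarrow> (m,v) \<in> strict_anc par \<Longrightarrow> m < v \<Longrightarrow> m \<le> lvl par v"
  unfolding lvl_eq using lvlset_fin by (simp add: lvlset_def)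

lemma mn_le_lvl: "nonM par v \<Longrightarrow> mn par v \<le> lvl par v"
  using mn_in_lvlset unfolding lvl_eq using lvlset_fin by simp

lemma E2: assumes x: "nonM par x" and m: "\<not> nonM par m" and a: "(m, lvl par x) \<in> strict_anc par"
  shows "x < m"
proof -
  have mx: "(m,x) \<in> strict_anc par" using anc_trans[OF a lvl_in(2)[OF x]] .
  have "lvl par x < m" using M_less[OF lvl_in(1)[OF x] a] .
  moreover have "m \<noteq> x" using anc_neq[OF mx] .
  moreover have "\<not> m < x"
  proof
    assume "m < x" then have "m \<le> lvl par x" using lvl_max[OF m mx] by simp
    with \<open>lvl par x < m\<close> show False by simp
  qed
  ultimately show ?thesis by simp
qed

definition cgood :: "(nat \<Rightarrow> nat) \<Rightarrow> bool" where
  "cgood c \<longleftrightarrow> (\<forall>x. nonM par x \<longrightarrow> (c x, x) \<in> strict_anc par \<and> c x < x \<and> mn par x \<le> c x)"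

lemma cgood_mn: "cgood (mn par)"
  unfolding cgood_def using mn_anc mn_less nonM_anc by blast

lemma cgood_lvl: "cgood (lvl par)"
  unfolding cgood_def using lvl_in mn_le_lvl by blast

lemma cls_fin: "finite (cls par c v)"
  by (rule finite_subset[of _ "{1..n}"]) (auto simp: cls_def dest: nonM_range)

lemma self_cls: "nonM par v \<Longrightarrow> v \<in> cls par c v"
  by (simp add: cls_def)

lemma piC_cls: "nonM par v \<Longrightarrow> piC par c v \<in> cls par c v"
  unfolding piC_def using rev_set_in[OF cls_fin self_cls] by simp

lemma piC_nonM: assumes "nonM par v" shows "nonM par (piC par c v)" "c (piC par c v) = c v"
  using piC_cls[OF assms] unfolding cls_def by simp_all

lemma piC_M: "\<not> nonM par v \<Longrightarrow> piC par c v = v"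
  by (simp add: piC_def)

lemma cls_eq: "c w = c v \<Longrightarrow> cls par c w = cls par c v"
  by (simp add: cls_def)

lemma piC_inv: "piC par c (piC par c v) = v"
proof (cases "nonM par v")
  case True
  have e: "cls par c (piC par c v) = cls par c v" using cls_eq piC_nonM(2)[OF True] by blast
  have "piC par c (piC par c v) = rev_set (cls par c v) (rev_set (cls par c v) v)"
    using piC_nonM(1)[OF True] e by (simp add: piC_def True)
  also have "\<dots> = v" using rev_set_inv[OF cls_fin self_cls[OF True]] .
  finally show ?thesis .
next
  case False then show ?thesis by (simp add: piC_def)
qed

lemma piC_anti: assumes v: "nonM par v" and w: "nonM par w" and e: "c v = c w" and vw: "v < w"
  shows "piC par c w < piC par c v"
proof -
  have wc: "w \<in> cls par c v" using w e by (simp add: cls_def)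
  have "rev_set (cls par c v) w < rev_set (cls par c v) v"
    using rev_set_anti[OF cls_fin self_cls[OF v] wc vw] .
  moreover have "cls par c w = cls par c v" using cls_eq e by metis
  ultimately show ?thesis by (simp add: piC_def v w)
qed

lemma piC_range: "piC par c v \<in> {1..n} \<longleftrightarrow> v \<in> {1..n}"
proof (cases "nonM par v")
  case True
  then show ?thesis using nonM_range piC_nonM(1)[OF True] by blast
next
  case False then show ?thesis by (simp add: piC_def)
qed

lemma piC_gt: assumes c: "cgood c" and v: "nonM par v" shows "c v < piC par c v"
proof -
  have "c (piC par c v) < piC par c v" using c piC_nonM(1)[OF v] unfolding cgood_def by blast
  then show ?thesis using piC_nonM(2)[OF v, of c] by simp
qed

lemma H1: assumes c: "cgood c" and w: "\<not> nonM par w" and uw: "(u,w) \<in> strict_anc par"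
  shows "w < piC par c u"
proof (cases "nonM par u")
  case True
  have cu: "(c u, u) \<in> strict_anc par" using c True unfolding cgood_def by blast
  have "w < c u" using M_less[OF w anc_trans[OF cu uw]] .
  then show ?thesis using piC_gt[OF c True] by simp
next
  case False
  then show ?thesis using M_less[OF w uw] by (simp add: piC_def)
qed

lemma H2: assumes c: "cgood c" and w: "nonM par w" shows "mn par w < piC par c w"
proof -
  have "mn par w \<le> c w" using c w unfolding cgood_def by blast
  then show ?thesis using piC_gt[OF c w] by simp
qed

lemma frst_relab: "frst n (relab (piC par c) par)"
  unfolding frst_def by (rule relab_forest[OF F piC_inv piC_range])

lemma anc_relab: "(x,y) \<in> strict_anc (relab (piC par c) par) \<longleftrightarrow>
   (piC par c x, piC par c y) \<in> strict_anc par"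
  by (rule relab_anc[OF piC_inv])

lemma nonM_relab: assumes c: "cgood c"
  shows "nonM (relab (piC par c) par) v \<longleftrightarrow> nonM par v"
proof -
  let ?p = "piC par c"
  have "nonM (relab ?p par) v \<longleftrightarrow> (\<exists>u. (?p u, ?p v) \<in> strict_anc par \<and> u < v)"
    unfolding nonM_def anc_relab by simp
  also have "\<dots> \<longleftrightarrow> nonM par v"
  proof
    assume "\<exists>u. (?p u, ?p v) \<in> strict_anc par \<and> u < v"
    then obtain u where u: "(?p u, ?p v) \<in> strict_anc par" "u < v" by blast
    show "nonM par v"
    proof (rule ccontr)
      assume nv: "\<not> nonM par v"
      then have "?p v = v" by (rule piC_M)
      then have "v < ?p (?p u)" using H1[OF c nv] u(1) by simp
      then show False using u(2) piC_inv by simp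
    qed
  next
    assume v: "nonM par v"
    define w where "w = ?p v"
    have w: "nonM par w" unfolding w_def by (rule piC_nonM(1)[OF v])
    obtain u0 where u0: "(u0,w) \<in> strict_anc par" using nonM_anc[OF w] by blast
    have m: "\<not> nonM par (mn par w)" by (rule mn_M[OF u0])
    have "?p (mn par w) = mn par w" using piC_M[OF m] .
    moreover have "(mn par w, w) \<in> strict_anc par" by (rule mn_anc[OF u0])
    moreover have "mn par w < ?p w" by (rule H2[OF c w])
    moreover have "?p w = v" unfolding w_def by (rule piC_inv)
    ultimately show "\<exists>u. (?p u, ?p v) \<in> strict_anc par \<and> u < v"
      unfolding w_def by (metis piC_inv)
  qed
  finally show ?thesis .
qed

end



definition PhiB :: "(nat \<Rightarrow> nat option) \<Rightarrow> (nat \<Rightarrow> nat option)" where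
  "PhiB par = relab (piC par (mn par)) par"

definition PhiE :: "(nat \<Rightarrow> nat option) \<Rightarrow> (nat \<Rightarrow> nat option)" where
  "PhiE par = relab (piC par (lvl par)) par"

context frst begin

lemma piC_relab_eq:
  assumes c: "cgood c"
    and c': "\<And>x. nonM par x \<Longrightarrow> c' x = c x"
  shows "piC (relab (piC par c) par) c' = piC par c"
proof (rule ext)
  fix x
  let ?G = "relab (piC par c) par"
  have nM: "\<And>y. nonM ?G y \<longleftrightarrow> nonM par y" using nonM_relab[OF c] by blast
  show "piC ?G c' x = piC par c x"
  proof (cases "nonM par x")
    case True
    have "cls ?G c' x = cls par c x"
      unfolding cls_def using nM c' True by auto
    moreover have "nonM ?G x" using nM True by blast
    ultimately show ?thesis using True by (simp add: piC_def[of ?G] piC_def[of par])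
  next
    case False
    moreover have "\<not> nonM ?G x" using nM False by blast
    ultimately show ?thesis by (simp add: piC_def[of ?G] piC_def[of par])
  qed
qed

lemma mn_relab:
  assumes v: "nonM par v"
  shows "mn (relab (piC par (mn par)) par) v = mn par v"
proof -
  let ?p = "piC par (mn par)"
  let ?G = "relab ?p par"
  interpret G: frst n ?G by (rule frst_relab)
  have c: "cgood (mn par)" by (rule cgood_mn)
  define w where "w = ?p v"
  have w: "nonM par w" unfolding w_def by (rule piC_nonM(1)[OF v])
  have mw: "mn par w = mn par v" unfolding w_def by (rule piC_nonM(2)[OF v])
  have vw: "?p w = v" unfolding w_def by (rule piC_inv)
  obtain u0 where u0: "(u0,w) \<in> strict_anc par" using nonM_anc[OF w] by blast
  have S: "{u. (u,v) \<in> strict_anc ?G} = {u. (?p u, w) \<in> strict_anc par}"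
    unfolding anc_relab w_def by simp
  have m: "\<not> nonM par (mn par w)" by (rule mn_M[OF u0])
  have mem: "mn par w \<in> {u. (?p u, w) \<in> strict_anc par}"
    using piC_M[OF m] mn_anc[OF u0] by simp
  have low: "mn par w \<le> u" if a: "(?p u, w) \<in> strict_anc par" for u
  proof (cases "nonM par (?p u)")
    case True
    have "mn par (?p u) < ?p (?p u)" using piC_gt[OF c True] .
    moreover have "mn par w \<le> mn par (?p u)"
    proof -
      obtain u1 where "(u1, ?p u) \<in> strict_anc par" using nonM_anc[OF True] by blast
      then show ?thesis using mn_le[OF anc_trans[OF mn_anc a]] by blast
    qed
    ultimately show ?thesis using piC_inv by (metis less_imp_le order_trans)
  next
    case False
    then have "?p (?p u) = ?p u" by (rule piC_M)
    then have "u = ?p u" using piC_inv by metis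
    then show ?thesis using mn_le[OF a] by simp
  qed
  have "mn ?G v = Min {u. (?p u, w) \<in> strict_anc par}"
    unfolding mn_def S by simp
  also have "\<dots> = mn par w"
  proof (rule Min_eqI)
    show "finite {u. (?p u, w) \<in> strict_anc par}" using G.anc_fin[of v] S by simp
  qed (use mem low in auto)
  finally show ?thesis using mw by simp
qed

lemma E1:
  assumes m: "\<not> nonM par m" and mw: "(m,w) \<in> strict_anc par" and w: "nonM par w"
  shows "m < piC par (lvl par) w \<longleftrightarrow> m < w"
proof -
  let ?p = "piC par (lvl par)"
  let ?l = "lvl par w"
  have w': "nonM par (?p w)" by (rule piC_nonM(1)[OF w])
  have lw': "lvl par (?p w) = ?l" by (rule piC_nonM(2)[OF w])
  have l1: "?l < w" by (rule lvl_in(3)[OF w])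
  have l2: "?l < ?p w" using lvl_in(3)[OF w'] lw' by simp
  have "m = ?l \<or> (m, ?l) \<in> strict_anc par \<or> (?l, m) \<in> strict_anc par"
    using anc_total[OF mw lvl_in(2)[OF w]] .
  then show ?thesis
  proof (elim disjE)
    assume "m = ?l" then show ?thesis using l1 l2 by simp
  next
    assume a: "(m, ?l) \<in> strict_anc par"
    have "w < m" by (rule E2[OF w m a])
    moreover have "?p w < m" using E2[OF w' m] a lw' by simp
    ultimately show ?thesis by simp
  next
    assume a: "(?l, m) \<in> strict_anc par"
    have "m < ?l" by (rule M_less[OF m a])
    then show ?thesis using l1 l2 by simp
  qed
qed

lemma lvl_relab:
  assumes v: "nonM par v"
  shows "lvl (relab (piC par (lvl par)) par) v = lvl par v"
proof -
  let ?p = "piC par (lvl par)"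
  let ?G = "relab ?p par"
  interpret G: frst n ?G by (rule frst_relab)
  have c: "cgood (lvl par)" by (rule cgood_lvl)
  have nM: "\<And>y. nonM ?G y \<longleftrightarrow> nonM par y" using nonM_relab[OF c] by blast
  define w where "w = ?p v"
  have w: "nonM par w" unfolding w_def by (rule piC_nonM(1)[OF v])
  have lw: "lvl par w = lvl par v" unfolding w_def by (rule piC_nonM(2)[OF v])
  have vw: "?p w = v" unfolding w_def by (rule piC_inv)
  have S: "{m. \<not> nonM ?G m \<and> (m,v) \<in> strict_anc ?G \<and> m < v} = lvlset w"
  proof (rule set_eqI)
    fix m
    show "m \<in> {m. \<not> nonM ?G m \<and> (m,v) \<in> strict_anc ?G \<and> m < v} \<longleftrightarrow> m \<in> lvlset w"
    proof (cases "nonM par m")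
      case True then show ?thesis using nM by (simp add: lvlset_def)
    next
      case False
      have pm: "?p m = m" by (rule piC_M[OF False])
      have "(m,v) \<in> strict_anc ?G \<longleftrightarrow> (m,w) \<in> strict_anc par"
        unfolding anc_relab pm w_def by simp
      moreover have "(m,w) \<in> strict_anc par \<Longrightarrow> m < v \<longleftrightarrow> m < w"
        using E1[OF False _ w] vw by simp
      ultimately show ?thesis using nM False by (auto simp: lvlset_def)
    qed
  qed
  have "lvl ?G v = Max (lvlset w)" unfolding lvl_def[of ?G] S by simp
  also have "\<dots> = lvl par w" by (simp add: lvl_eq)
  finally show ?thesis using lw by simp
qed

lemma PhiB_frst: "frst n (PhiB par)"
  unfolding PhiB_def by (rule frst_relab)

lemma PhiE_frst: "frst n (PhiE par)"
  unfolding PhiE_def by (rule frst_relab)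

lemma PhiB_inv: "PhiB (PhiB par) = par"
proof -
  let ?p = "piC par (mn par)"
  have "piC (PhiB par) (mn (PhiB par)) = ?p"
    unfolding PhiB_def by (rule piC_relab_eq[OF cgood_mn mn_relab])
  then show ?thesis unfolding PhiB_def[of "PhiB par"]
    by (simp add: PhiB_def relab_relab[OF piC_inv])
qed

lemma PhiE_inv: "PhiE (PhiE par) = par"
proof -
  let ?p = "piC par (lvl par)"
  have "piC (PhiE par) (lvl (PhiE par)) = ?p"
    unfolding PhiE_def by (rule piC_relab_eq[OF cgood_lvl lvl_relab])
  then show ?thesis unfolding PhiE_def[of "PhiE par"]
    by (simp add: PhiE_def relab_relab[OF piC_inv])
qed

lemma transE:
  assumes uv: "(u,v) \<in> strict_anc par"
  shows "piC par (lvl par) u < piC par (lvl par) v \<longleftrightarrow>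
    (if nonM par u \<and> nonM par v \<and> lvl par u = lvl par v then v < u else u < v)"
proof -
  let ?p = "piC par (lvl par)"
  have neq: "u \<noteq> v" using anc_neq[OF uv] .
  show ?thesis
  proof (cases "nonM par u")
    case False
    note u = False
    show ?thesis
    proof (cases "nonM par v")
      case False
      then show ?thesis using u by (simp add: piC_M)
    next
      case True
      then show ?thesis using u E1[OF u uv True] by (simp add: piC_M)
    qed
  next
    case True
    note u = True
    show ?thesis
    proof (cases "nonM par v")
      case False
      note v = False
      have "v < u" using M_less[OF v uv] .
      moreover have "v < ?p u" using H1[OF cgood_lvl v uv] .
      ultimately show ?thesis using u v by (simp add: piC_M)
    next
      case True
      note v = True
      show ?thesis
      proof (cases "lvl par u = lvl par v")
        case True
        show ?thesis
        proof (cases "u < v")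
          case True
          then have "?p v < ?p u" using piC_anti[OF u v] \<open>lvl par u = lvl par v\<close> by blast
          then show ?thesis using True u v \<open>lvl par u = lvl par v\<close> by simp
        next
          case False
          then have "v < u" using neq by simp
          then have "?p u < ?p v" using piC_anti[OF v u] \<open>lvl par u = lvl par v\<close> by simp
          then show ?thesis using \<open>v < u\<close> u v \<open>lvl par u = lvl par v\<close> by simp
        qed
      next
        case False
        note ne = False
        let ?a = "lvl par u" and ?b = "lvl par v"
        have a: "(?a, v) \<in> strict_anc par" using anc_trans[OF lvl_in(2)[OF u] uv] .
        have b: "(?b, v) \<in> strict_anc par" by (rule lvl_in(2)[OF v])
        have u': "nonM par (?p u)" "lvl par (?p u) = ?a" using piC_nonM[OF u] by simp_all
        have v': "nonM par (?p v)" "lvl par (?p v) = ?b" using piC_nonM[OF v] by simp_all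
        have "(?a, ?b) \<in> strict_anc par \<or> (?b, ?a) \<in> strict_anc par"
          using anc_total[OF a b] ne by blast
        then show ?thesis
        proof
          assume ab: "(?a, ?b) \<in> strict_anc par"
          have "v < ?a" by (rule E2[OF v lvl_in(1)[OF u] ab])
          moreover have "?p v < ?a" using E2[OF v'(1) lvl_in(1)[OF u]] ab v'(2) by simp
          moreover have "?a < u" by (rule lvl_in(3)[OF u])
          moreover have "?a < ?p u" using lvl_in(3)[OF u'(1)] u'(2) by simp
          ultimately show ?thesis using ne by auto
        next
          assume ba: "(?b, ?a) \<in> strict_anc par"
          have "u < ?b" by (rule E2[OF u lvl_in(1)[OF v] ba])
          moreover have "?p u < ?b" using E2[OF u'(1) lvl_in(1)[OF v]] ba u'(2) by simp
          moreover have "?b < v" by (rule lvl_in(3)[OF v])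
          moreover have "?b < ?p v" using lvl_in(3)[OF v'(1)] v'(2) by simp
          ultimately show ?thesis using ne by auto
        qed
      qed
    qed
  qed
qed

end



lemma len3: "length vs = 3 \<Longrightarrow> \<exists>a b c. vs = [a,b,c]"
  by (cases vs; cases "tl vs"; cases "tl (tl vs)"; auto simp: numeral_eq_Suc)
lemma len4: "length vs = 4 \<Longrightarrow> \<exists>a b c d. vs = [a,b,c,d]"
  by (cases vs; cases "tl vs"; cases "tl (tl vs)"; cases "tl (tl (tl vs))"; auto simp: numeral_eq_Suc)

lemma inst3: "is_instance par [x,y,z] [a,b,c] \<longleftrightarrow>
  (a,b) \<in> strict_anc par \<and> (b,c) \<in> strict_anc par \<and>
  (a<b \<longleftrightarrow> x<y) \<and> (a<c \<longleftrightarrow> x<z) \<and> (b<a \<longleftrightarrow> y<x) \<and> (b<c \<longleftrightarrow> y<z)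
  \<and> (c<a \<longleftrightarrow> z<x) \<and> (c<b \<longleftrightarrow> z<y)"
  unfolding is_instance_def by (simp add: numeral_eq_Suc All_less_Suc2 all_conj_distrib)

lemma inst4: "is_instance par [x,y,z,t] [a,b,c,d] \<longleftrightarrow>
  (a,b) \<in> strict_anc par \<and> (b,c) \<in> strict_anc par \<and> (c,d) \<in> strict_anc par \<and>
  (a<b \<longleftrightarrow> x<y) \<and> (a<c \<longleftrightarrow> x<z) \<and> (a<d \<longleftrightarrow> x<t) \<and> (b<a \<longleftrightarrow> y<x) \<and> (b<c \<longleftrightarrow> y<z)
  \<and> (b<d \<longleftrightarrow> y<t) \<and> (c<a \<longleftrightarrow> z<x) \<and> (c<b \<longleftrightarrow> z<y) \<and> (c<d \<longleftrightarrow> z<t)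
  \<and> (d<a \<longleftrightarrow> t<x) \<and> (d<b \<longleftrightarrow> t<y) \<and> (d<c \<longleftrightarrow> t<z)"
  unfolding is_instance_def by (simp add: numeral_eq_Suc All_less_Suc2 all_conj_distrib)

lemma ex3: "(\<exists>vs. is_instance par [x,y,z] vs) \<longleftrightarrow> (\<exists>a b c. is_instance par [x,y,z] [a,b,c])"
proof
  assume "\<exists>vs. is_instance par [x,y,z] vs"
  then obtain vs where i: "is_instance par [x,y,z] vs" by blast
  then have "length vs = 3" by (simp add: is_instance_def)
  then obtain a b c where "vs = [a,b,c]" using len3 by blast
  with i show "\<exists>a b c. is_instance par [x,y,z] [a,b,c]" by blast
qed blast

lemma ex4: "(\<exists>vs. is_instance par [x,y,z,t] vs) \<longleftrightarrow> (\<exists>a b c d. is_instance par [x,y,z,t] [a,b,c,d])"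
proof
  assume "\<exists>vs. is_instance par [x,y,z,t] vs"
  then obtain vs where i: "is_instance par [x,y,z,t] vs" by blast
  then have "length vs = 4" by (simp add: is_instance_def)
  then obtain a b c d where "vs = [a,b,c,d]" using len4 by blast
  with i show "\<exists>a b c d. is_instance par [x,y,z,t] [a,b,c,d]" by blast
qed blast

definition P123 where "P123 par \<longleftrightarrow> (\<exists>a b c. (a,b) \<in> strict_anc par \<and> (b,c) \<in> strict_anc par \<and> a < b \<and> b < c)"
definition P132 where "P132 par \<longleftrightarrow> (\<exists>a b c. (a,b) \<in> strict_anc par \<and> (b,c) \<in> strict_anc par \<and> a < c \<and> c < b)"
definition P2413 where "P2413 par \<longleftrightarrow> (\<exists>a b c d. (a,b) \<in> strict_anc par \<and> (b,c) \<in> strict_anc par \<and> (c,d) \<in> strict_anc par \<and> c < a \<and> a < d \<and> d < b)"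
definition P2314 where "P2314 par \<longleftrightarrow> (\<exists>a b c d. (a,b) \<in> strict_anc par \<and> (b,c) \<in> strict_anc par \<and> (c,d) \<in> strict_anc par \<and> c < a \<and> a < b \<and> b < d)"
definition P3142 where "P3142 par \<longleftrightarrow> (\<exists>a b c d. (a,b) \<in> strict_anc par \<and> (b,c) \<in> strict_anc par \<and> (c,d) \<in> strict_anc par \<and> b < d \<and> d < a \<and> a < c)"
definition P3124 where "P3124 par \<longleftrightarrow> (\<exists>a b c d. (a,b) \<in> strict_anc par \<and> (b,c) \<in> strict_anc par \<and> (c,d) \<in> strict_anc par \<and> b < c \<and> c < a \<and> a < d)"

lemma I123: "(\<exists>vs. is_instance par [1,2,3] vs) \<longleftrightarrow> P123 par"
  unfolding ex3 inst3 P123_def by (intro iff_exI) auto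
lemma I132: "(\<exists>vs. is_instance par [1,3,2] vs) \<longleftrightarrow> P132 par"
  unfolding ex3 inst3 P132_def by (intro iff_exI) auto
lemma I2413: "(\<exists>vs. is_instance par [2,4,1,3] vs) \<longleftrightarrow> P2413 par"
  unfolding ex4 inst4 P2413_def by (intro iff_exI) auto
lemma I2314: "(\<exists>vs. is_instance par [2,3,1,4] vs) \<longleftrightarrow> P2314 par"
  unfolding ex4 inst4 P2314_def by (intro iff_exI) auto
lemma I3142: "(\<exists>vs. is_instance par [3,1,4,2] vs) \<longleftrightarrow> P3142 par"
  unfolding ex4 inst4 P3142_def by (intro iff_exI) auto
lemma I3124: "(\<exists>vs. is_instance par [3,1,2,4] vs) \<longleftrightarrow> P3124 par"
  unfolding ex4 inst4 P3124_def by (intro iff_exI) auto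

lemma avoids2: "avoids par {p, q} \<longleftrightarrow> \<not> (\<exists>vs. is_instance par p vs) \<and> \<not> (\<exists>vs. is_instance par q vs)"
  by (simp add: avoids_def)



context frst begin

lemma ancE: "(x,y) \<in> strict_anc (PhiE par) \<longleftrightarrow>
   (piC par (lvl par) x, piC par (lvl par) y) \<in> strict_anc par"
  unfolding PhiE_def by (rule anc_relab)

lemma ancE': "(piC par (lvl par) x, piC par (lvl par) y) \<in> strict_anc (PhiE par) \<longleftrightarrow>
   (x, y) \<in> strict_anc par"
  unfolding ancE piC_inv ..

lemma nonM_ltI: "(u,v) \<in> strict_anc par \<Longrightarrow> u < v \<Longrightarrow> nonM par v"
  unfolding nonM_def by blast

lemma piC_neq: "nonM par v \<Longrightarrow> \<not> nonM par m \<Longrightarrow> piC par (lvl par) v \<noteq> m"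
  using piC_nonM(1)[of v "lvl par"] by auto

lemma piC_inj: "piC par c u = piC par c v \<Longrightarrow> u = v"
  by (metis piC_inv)

lemma L1E_123:
  assumes ab: "(a,b) \<in> strict_anc par" and bc: "(b,c) \<in> strict_anc par" and "a < b" "b < c"
  shows "P132 (PhiE par) \<or> P3124 (PhiE par)"
proof -
  let ?p = "piC par (lvl par)"
  have b: "nonM par b" using nonM_ltI[OF ab] \<open>a < b\<close> .
  have ac: "(a,c) \<in> strict_anc par" using anc_trans[OF ab bc] .
  have c: "nonM par c" using nonM_ltI[OF ac] \<open>a < b\<close> \<open>b < c\<close> by simp
  define h where "h = lvl par b"
  have hM: "\<not> nonM par h" and hb: "(h,b) \<in> strict_anc par" and hlt: "h < b"
    using lvl_in[OF b] unfolding h_def by auto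
  have hc: "(h,c) \<in> strict_anc par" using anc_trans[OF hb bc] .
  have ph: "?p h = h" using piC_M[OF hM] .
  show ?thesis
  proof (cases "lvl par b = lvl par c")
    case True
    have 1: "h < ?p c" using transE[OF hc] hM hlt \<open>b < c\<close> ph by simp
    have 2: "\<not> ?p b < ?p c" using transE[OF bc] b c True \<open>b < c\<close> by simp
    have 3: "?p b \<noteq> ?p c" using piC_inj \<open>b < c\<close> by (metis less_irrefl)
    have "P132 (PhiE par)"
      unfolding P132_def
    proof (intro exI conjI)
      show "(?p h, ?p b) \<in> strict_anc (PhiE par)" using ancE' hb by blast
      show "(?p b, ?p c) \<in> strict_anc (PhiE par)" using ancE' bc by blast
      show "?p h < ?p c" using 1 ph by simp
      show "?p c < ?p b" using 2 3 by simp
    qed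
    then show ?thesis by blast
  next
    case False
    define x where "x = lvl par c"
    have xM: "\<not> nonM par x" and xc: "(x,c) \<in> strict_anc par" and xlt: "x < c"
      using lvl_in[OF c] unfolding x_def by auto
    have "h \<le> x" unfolding x_def using lvl_max[OF hM hc] hlt \<open>b < c\<close> by simp
    then have hx: "h < x" using False unfolding h_def x_def by simp
    have bx: "b < x"
    proof (rule ccontr)
      assume "\<not> b < x"
      moreover have "x \<noteq> b" using b xM by blast
      ultimately have xb: "x < b" by simp
      have "x = b \<or> (x,b) \<in> strict_anc par \<or> (b,x) \<in> strict_anc par" using anc_total[OF xc bc] .
      then show False
      proof (elim disjE)
        assume "x = b" then show False using \<open>x \<noteq> b\<close> by simp
      next
        assume "(x,b) \<in> strict_anc par"
        then have "x \<le> h" unfolding h_def using lvl_max[OF xM] xb by simp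
        then show False using hx by simp
      next
        assume "(b,x) \<in> strict_anc par"
        then have "(h,x) \<in> strict_anc par" using anc_trans[OF hb] by blast
        then have "x < h" using M_less[OF xM] by blast
        then show False using hx by simp
      qed
    qed
    have xb: "(x,b) \<in> strict_anc par"
    proof -
      have "x = b \<or> (x,b) \<in> strict_anc par \<or> (b,x) \<in> strict_anc par" using anc_total[OF xc bc] .
      moreover have "x \<noteq> b" using bx by simp
      moreover have "(b,x) \<notin> strict_anc par" using M_less[OF xM] bx by (meson less_asym)
      ultimately show ?thesis by blast
    qed
    have xh: "(x,h) \<in> strict_anc par"
    proof -
      have "x = h \<or> (x,h) \<in> strict_anc par \<or> (h,x) \<in> strict_anc par" using anc_total[OF xb hb] .
      moreover have "x \<noteq> h" using hx by simp
      moreover have "(h,x) \<notin> strict_anc par" using M_less[OF xM] hx by (meson less_asym)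
      ultimately show ?thesis by blast
    qed
    have px: "?p x = x" using piC_M[OF xM] .
    have 1: "h < ?p b" using transE[OF hb] hM hlt ph by simp
    have 2: "?p b < x"
    proof -
      have "\<not> x < ?p b" using transE[OF xb] xM bx px by simp
      moreover have "?p b \<noteq> x" using piC_neq[OF b xM] .
      ultimately show ?thesis by simp
    qed
    have 3: "x < ?p c" using transE[OF xc] xM xlt px by simp
    have "P3124 (PhiE par)"
      unfolding P3124_def
    proof (intro exI conjI)
      show "(?p x, ?p h) \<in> strict_anc (PhiE par)" using ancE' xh by blast
      show "(?p h, ?p b) \<in> strict_anc (PhiE par)" using ancE' hb by blast
      show "(?p b, ?p c) \<in> strict_anc (PhiE par)" using ancE' bc by blast
      show "?p h < ?p b" using 1 ph by simp
      show "?p b < ?p x" using 2 px by simp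
      show "?p x < ?p c" using 3 px by simp
    qed
    then show ?thesis by blast
  qed
qed

lemma L1E_3142:
  assumes n123: "\<not> P123 par"
    and ab: "(a,b) \<in> strict_anc par" and bc: "(b,c) \<in> strict_anc par" and cd: "(c,d) \<in> strict_anc par"
    and o: "b < d" "d < a" "a < c"
  shows "P132 (PhiE par)"
proof -
  let ?p = "piC par (lvl par)"
  have ac: "(a,c) \<in> strict_anc par" using anc_trans[OF ab bc] .
  have bd: "(b,d) \<in> strict_anc par" using anc_trans[OF bc cd] .
  have ad: "(a,d) \<in> strict_anc par" using anc_trans[OF ab bd] .
  have aM: "\<not> nonM par a"
  proof
    assume a: "nonM par a"
    have "P123 par" unfolding P123_def using lvl_in[OF a] ac o by blast
    then show False using n123 by blast
  qed
  have bM: "\<not> nonM par b"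
  proof
    assume b: "nonM par b"
    have "P123 par" unfolding P123_def using lvl_in[OF b] bd o by blast
    then show False using n123 by blast
  qed
  have c: "nonM par c" using nonM_ltI[OF ac] o by simp
  have d: "nonM par d" using nonM_ltI[OF bd] o by simp
  have "a \<le> lvl par c" using lvl_max[OF aM ac] o by simp
  moreover have "lvl par d < a" using lvl_in(3)[OF d] o by simp
  ultimately have ne: "lvl par c \<noteq> lvl par d" by simp
  have pb: "?p b = b" using piC_M[OF bM] .
  have 1: "b < ?p d" using transE[OF bd] bM o pb by simp
  have 2: "?p d < ?p c"
  proof -
    have "\<not> ?p c < ?p d" using transE[OF cd] ne o by simp
    moreover have "?p c \<noteq> ?p d" using piC_inj o by (metis less_irrefl less_trans)
    ultimately show ?thesis by simp
  qed
  show "P132 (PhiE par)"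
    unfolding P132_def
  proof (intro exI conjI)
    show "(?p b, ?p c) \<in> strict_anc (PhiE par)" using ancE' bc by blast
    show "(?p c, ?p d) \<in> strict_anc (PhiE par)" using ancE' cd by blast
    show "?p b < ?p d" using 1 pb by simp
    show "?p d < ?p c" using 2 .
  qed
qed

lemma L1E: "P123 par \<or> P3142 par \<Longrightarrow> P132 (PhiE par) \<or> P3124 (PhiE par)"
proof -
  assume h: "P123 par \<or> P3142 par"
  show ?thesis
  proof (cases "P123 par")
    case True
    then show ?thesis unfolding P123_def using L1E_123 by blast
  next
    case False
    then have "P3142 par" using h by blast
    then show ?thesis unfolding P3142_def using L1E_3142[OF False] by blast
  qed
qed

lemma L2E_132:
  assumes ab: "(a,b) \<in> strict_anc par" and bc: "(b,c) \<in> strict_anc par" and o: "a < c" "c < b"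
  shows "P123 (PhiE par) \<or> P3142 (PhiE par)"
proof -
  let ?p = "piC par (lvl par)"
  have ac: "(a,c) \<in> strict_anc par" using anc_trans[OF ab bc] .
  have b: "nonM par b" using nonM_ltI[OF ab] o by simp
  have c: "nonM par c" using nonM_ltI[OF ac] o by simp
  show ?thesis
  proof (cases "lvl par b = lvl par c")
    case True
    define h where "h = lvl par b"
    have hM: "\<not> nonM par h" and hb: "(h,b) \<in> strict_anc par" and hlt: "h < b"
      using lvl_in[OF b] unfolding h_def by auto
    have ph: "?p h = h" using piC_M[OF hM] .
    have 1: "h < ?p b" using transE[OF hb] hM hlt ph by simp
    have 2: "?p b < ?p c" using transE[OF bc] b c True o by simp
    have "P123 (PhiE par)"
      unfolding P123_def
    proof (intro exI conjI)
      show "(?p h, ?p b) \<in> strict_anc (PhiE par)" using ancE' hb by blast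
      show "(?p b, ?p c) \<in> strict_anc (PhiE par)" using ancE' bc by blast
      show "?p h < ?p b" using 1 ph by simp
      show "?p b < ?p c" using 2 .
    qed
    then show ?thesis by blast
  next
    case False
    define x where "x = lvl par b"
    have xM: "\<not> nonM par x" and xb: "(x,b) \<in> strict_anc par" and xlt: "x < b"
      using lvl_in[OF b] unfolding x_def by auto
    have xc: "(x,c) \<in> strict_anc par" using anc_trans[OF xb bc] .
    define y where "y = lvl par c"
    have yM: "\<not> nonM par y" and yc: "(y,c) \<in> strict_anc par" and ylt: "y < c"
      using lvl_in[OF c] unfolding y_def by auto
    have cx: "c < x"
    proof (rule ccontr)
      assume "\<not> c < x"
      moreover have "x \<noteq> c" using c xM by blast
      ultimately have xlc: "x < c" by simp
      have "x \<le> y" unfolding y_def using lvl_max[OF xM xc xlc] .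
      then have xy: "x < y" using False unfolding x_def y_def by simp
      have "y = b \<or> (y,b) \<in> strict_anc par \<or> (b,y) \<in> strict_anc par" using anc_total[OF yc bc] .
      then show False
      proof (elim disjE)
        assume "y = b" then show False using b yM by blast
      next
        assume "(y,b) \<in> strict_anc par"
        then have "y \<le> x" unfolding x_def using lvl_max[OF yM] ylt o by simp
        then show False using xy by simp
      next
        assume "(b,y) \<in> strict_anc par"
        then have "(x,y) \<in> strict_anc par" using anc_trans[OF xb] by blast
        then have "y < x" using M_less[OF yM] by blast
        then show False using xy by simp
      qed
    qed
    define z where "z = mn par b"
    have zM: "\<not> nonM par z" unfolding z_def by (rule mn_M[OF ab])
    have zb: "(z,b) \<in> strict_anc par" unfolding z_def by (rule mn_anc[OF ab])
    have zc: "(z,c) \<in> strict_anc par" using anc_trans[OF zb bc] .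
    have "z \<le> a" unfolding z_def by (rule mn_le[OF ab])
    then have zlt: "z < c" using o by simp
    have xz: "(x,z) \<in> strict_anc par"
    proof -
      have "x = z \<or> (x,z) \<in> strict_anc par \<or> (z,x) \<in> strict_anc par" using anc_total[OF xb zb] .
      moreover have "x \<noteq> z" using cx zlt by simp
      moreover have "(z,x) \<notin> strict_anc par" using M_less[OF xM] cx zlt by (meson less_asym less_trans)
      ultimately show ?thesis by blast
    qed
    have px: "?p x = x" using piC_M[OF xM] .
    have pz: "?p z = z" using piC_M[OF zM] .
    have 1: "z < ?p c" using transE[OF zc] zM zlt pz by simp
    have 2: "?p c < x"
    proof -
      have "\<not> x < ?p c" using transE[OF xc] xM cx px by simp
      moreover have "?p c \<noteq> x" using piC_neq[OF c xM] .
      ultimately show ?thesis by simp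
    qed
    have 3: "x < ?p b" using transE[OF xb] xM xlt px by simp
    have "P3142 (PhiE par)"
      unfolding P3142_def
    proof (intro exI conjI)
      show "(?p x, ?p z) \<in> strict_anc (PhiE par)" using ancE' xz by blast
      show "(?p z, ?p b) \<in> strict_anc (PhiE par)" using ancE' zb by blast
      show "(?p b, ?p c) \<in> strict_anc (PhiE par)" using ancE' bc by blast
      show "?p z < ?p c" using 1 pz by simp
      show "?p c < ?p x" using 2 px by simp
      show "?p x < ?p b" using 3 px by simp
    qed
    then show ?thesis by blast
  qed
qed

lemma L2E_3124:
  assumes n132: "\<not> P132 par"
    and ab: "(a,b) \<in> strict_anc par" and bc: "(b,c) \<in> strict_anc par" and cd: "(c,d) \<in> strict_anc par"
    and o: "b < c" "c < a" "a < d"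
  shows "P123 (PhiE par)"
proof -
  let ?p = "piC par (lvl par)"
  have ac: "(a,c) \<in> strict_anc par" using anc_trans[OF ab bc] .
  have bd: "(b,d) \<in> strict_anc par" using anc_trans[OF bc cd] .
  have ad: "(a,d) \<in> strict_anc par" using anc_trans[OF ac cd] .
  have c: "nonM par c" using nonM_ltI[OF bc] o by simp
  have d: "nonM par d" using nonM_ltI[OF bd] o by simp
  have ne: "lvl par c \<noteq> lvl par d"
  proof
    assume eq: "lvl par c = lvl par d"
    show False
    proof (cases "nonM par a")
      case False
      have "a \<le> lvl par d" using lvl_max[OF False ad] o by simp
      moreover have "lvl par c < c" by (rule lvl_in(3)[OF c])
      ultimately show False using eq o by simp
    next
      case True
      define k where "k = lvl par a"
      have kM: "\<not> nonM par k" and ka: "(k,a) \<in> strict_anc par" and klt: "k < a"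
        using lvl_in[OF True] unfolding k_def by auto
      show False
      proof (cases "k < c")
        case True
        then have "P132 par" unfolding P132_def using ka ac o by blast
        then show False using n132 by blast
      next
        case False
        moreover have "k \<noteq> c" using c kM by blast
        ultimately have ck: "c < k" by simp
        have kd: "(k,d) \<in> strict_anc par" using anc_trans[OF ka ad] .
        have "k \<le> lvl par d" using lvl_max[OF kM kd] klt o by simp
        moreover have "lvl par c < c" by (rule lvl_in(3)[OF c])
        ultimately show False using eq ck by simp
      qed
    qed
  qed
  define z where "z = mn par c"
  have zM: "\<not> nonM par z" unfolding z_def by (rule mn_M[OF bc])
  have zc: "(z,c) \<in> strict_anc par" unfolding z_def by (rule mn_anc[OF bc])
  have "z \<le> b" unfolding z_def by (rule mn_le[OF bc])
  then have zlt: "z < c" using o by simp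
  have pz: "?p z = z" using piC_M[OF zM] .
  have 1: "z < ?p c" using transE[OF zc] zM zlt pz by simp
  have 2: "?p c < ?p d" using transE[OF cd] ne o by simp
  show "P123 (PhiE par)"
    unfolding P123_def
  proof (intro exI conjI)
    show "(?p z, ?p c) \<in> strict_anc (PhiE par)" using ancE' zc by blast
    show "(?p c, ?p d) \<in> strict_anc (PhiE par)" using ancE' cd by blast
    show "?p z < ?p c" using 1 pz by simp
    show "?p c < ?p d" using 2 .
  qed
qed

lemma L2E: "P132 par \<or> P3124 par \<Longrightarrow> P123 (PhiE par) \<or> P3142 (PhiE par)"
proof -
  assume h: "P132 par \<or> P3124 par"
  show ?thesis
  proof (cases "P132 par")
    case True
    then show ?thesis unfolding P132_def using L2E_132 by blast
  next
    case False
    then have "P3124 par" using h by blast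
    then show ?thesis unfolding P3124_def using L2E_3124[OF False] by blast
  qed
qed

lemma avoidE1: "avoids par {[1,2,3],[3,1,4,2]} \<Longrightarrow> avoids (PhiE par) {[1,3,2],[3,1,2,4]}"
proof -
  assume a: "avoids par {[1,2,3],[3,1,4,2]}"
  interpret G: frst n "PhiE par" by (rule PhiE_frst)
  show ?thesis
  proof (rule ccontr)
    assume "\<not> avoids (PhiE par) {[1,3,2],[3,1,2,4]}"
    then have "P132 (PhiE par) \<or> P3124 (PhiE par)" unfolding avoids2 I132 I3124 by blast
    then have "P123 (PhiE (PhiE par)) \<or> P3142 (PhiE (PhiE par))" by (rule G.L2E)
    then have "P123 par \<or> P3142 par" unfolding PhiE_inv .
    then show False using a unfolding avoids2 I123 I3142 by blast
  qed
qed

lemma avoidE2: "avoids par {[1,3,2],[3,1,2,4]} \<Longrightarrow> avoids (PhiE par) {[1,2,3],[3,1,4,2]}"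
proof -
  assume a: "avoids par {[1,3,2],[3,1,2,4]}"
  interpret G: frst n "PhiE par" by (rule PhiE_frst)
  show ?thesis
  proof (rule ccontr)
    assume "\<not> avoids (PhiE par) {[1,2,3],[3,1,4,2]}"
    then have "P123 (PhiE par) \<or> P3142 (PhiE par)" unfolding avoids2 I123 I3142 by blast
    then have "P132 (PhiE (PhiE par)) \<or> P3124 (PhiE (PhiE par))" by (rule G.L1E)
    then have "P132 par \<or> P3124 par" unfolding PhiE_inv .
    then show False using a unfolding avoids2 I132 I3124 by blast
  qed
qed

end



definition condI :: "(nat \<Rightarrow> nat option) \<Rightarrow> bool" where
  "condI par \<longleftrightarrow> (\<forall>v w. nonM par v \<longrightarrow> nonM par w \<longrightarrow> (v,w) \<in> strict_anc par \<longrightarrow>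
      mn par v = mn par w \<longrightarrow> w < v)"

definition condI' :: "(nat \<Rightarrow> nat option) \<Rightarrow> bool" where
  "condI' par \<longleftrightarrow> (\<forall>v w. nonM par v \<longrightarrow> nonM par w \<longrightarrow> (v,w) \<in> strict_anc par \<longrightarrow>
      mn par v = mn par w \<longrightarrow> v < w)"

definition cross :: "(nat \<Rightarrow> nat option) \<Rightarrow> bool" where
  "cross par \<longleftrightarrow> (\<forall>v w. nonM par v \<longrightarrow> nonM par w \<longrightarrow> (v,w) \<in> strict_anc par \<longrightarrow>
      mn par v \<noteq> mn par w \<longrightarrow> w < mn par v)"

context frst begin

lemma nonM_anc': "nonM par v \<Longrightarrow> (mn par v, v) \<in> strict_anc par"
  using nonM_anc mn_anc by blast

lemma between:
  assumes v: "nonM par v" and w: "nonM par w" and vw: "(v,w) \<in> strict_anc par"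
    and ne: "mn par v \<noteq> mn par w"
  shows "(v, mn par w) \<in> strict_anc par" "mn par w < mn par v"
proof -
  have mw: "(mn par w, w) \<in> strict_anc par" by (rule nonM_anc'[OF w])
  have "mn par w \<le> mn par v" using mn_le[OF anc_trans[OF nonM_anc'[OF v] vw]] .
  then show lt: "mn par w < mn par v" using ne by simp
  have "mn par w = v \<or> (mn par w, v) \<in> strict_anc par \<or> (v, mn par w) \<in> strict_anc par"
    using anc_total[OF mw vw] .
  moreover have "mn par w \<noteq> v" using mn_M[OF mw] v by blast
  moreover have "(mn par w, v) \<notin> strict_anc par"
  proof
    assume "(mn par w, v) \<in> strict_anc par"
    then have "mn par v \<le> mn par w" by (rule mn_le)
    then show False using lt by simp
  qed
  ultimately show "(v, mn par w) \<in> strict_anc par" by blast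
qed

lemma sandwich:
  assumes b: "nonM par b" and bc: "(b,c) \<in> strict_anc par" and cd: "(c,d) \<in> strict_anc par"
    and e: "mn par b = mn par d"
  shows "nonM par c" "mn par c = mn par b"
proof -
  have mb: "(mn par b, b) \<in> strict_anc par" by (rule nonM_anc'[OF b])
  have mbc: "(mn par b, c) \<in> strict_anc par" using anc_trans[OF mb bc] .
  have "mn par d \<le> c" by (rule mn_le[OF cd])
  moreover have "c \<noteq> mn par b"
  proof
    assume "c = mn par b"
    then have "(c,b) \<in> strict_anc par" using mb by simp
    then show False using asym bc by blast
  qed
  ultimately have lt: "mn par b < c" using e by simp
  then show c: "nonM par c" using nonM_ltI[OF mbc] by simp
  have "mn par c \<le> mn par b" by (rule mn_le[OF mbc])
  moreover have "mn par d \<le> mn par c" using mn_le[OF anc_trans[OF nonM_anc'[OF c] cd]] .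
  ultimately show "mn par c = mn par b" using e by simp
qed

lemma charA: "avoids par {[1,2,3],[2,4,1,3]} \<longleftrightarrow> condI par \<and> cross par"
  unfolding avoids2 I123 I2413
proof (intro iffI conjI)
  assume h: "\<not> P123 par \<and> \<not> P2413 par"
  show "condI par" unfolding condI_def
  proof (intro allI impI)
    fix v w assume v: "nonM par v" and w: "nonM par w" and vw: "(v,w) \<in> strict_anc par"
      and e: "mn par v = mn par w"
    show "w < v"
    proof (rule ccontr)
      assume "\<not> w < v"
      then have "v < w" using anc_neq[OF vw] by simp
      then have "P123 par" unfolding P123_def using nonM_anc'[OF v] mn_less[OF v] vw by blast
      then show False using h by blast
    qed
  qed
  show "cross par" unfolding cross_def
  proof (intro allI impI)
    fix v w assume v: "nonM par v" and w: "nonM par w" and vw: "(v,w) \<in> strict_anc par"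
      and ne: "mn par v \<noteq> mn par w"
    show "w < mn par v"
    proof (rule ccontr)
      assume "\<not> w < mn par v"
      moreover have "w \<noteq> mn par v" using anc_neq[OF anc_trans[OF nonM_anc'[OF v] vw]] by simp
      ultimately have mw: "mn par v < w" by simp
      have b1: "(v, mn par w) \<in> strict_anc par" and b2: "mn par w < mn par v"
        using between[OF v w vw ne] by auto
      show False
      proof (cases "v < w")
        case True
        then have "P123 par" unfolding P123_def using nonM_anc'[OF v] mn_less[OF v] vw by blast
        then show False using h by blast
      next
        case False
        then have wv: "w < v" using anc_neq[OF vw] by simp
        have "P2413 par" unfolding P2413_def
          using nonM_anc'[OF v] b1 nonM_anc'[OF w] b2 mw wv by blast
        then show False using h by blast
      qed
    qed
  qed
next
  assume h: "condI par \<and> cross par"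
  then have cI: "condI par" and cr: "cross par" by auto
  show "\<not> P123 par"
  proof
    assume "P123 par"
    then obtain a b c where ab: "(a,b) \<in> strict_anc par" and bc: "(b,c) \<in> strict_anc par"
      and o: "a < b" "b < c" unfolding P123_def by blast
    have b: "nonM par b" using nonM_ltI[OF ab] o by simp
    have c: "nonM par c" using nonM_ltI[OF anc_trans[OF ab bc]] o by simp
    show False
    proof (cases "mn par b = mn par c")
      case True
      then have "c < b" using cI b c bc unfolding condI_def by blast
      then show False using o by simp
    next
      case False
      then have "c < mn par b" using cr b c bc unfolding cross_def by blast
      moreover have "mn par b \<le> a" by (rule mn_le[OF ab])
      ultimately show False using o by simp
    qed
  qed
  show "\<not> P2413 par"
  proof
    assume "P2413 par"
    then obtain a b c d where ab: "(a,b) \<in> strict_anc par" and bc: "(b,c) \<in> strict_anc par"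
      and cd: "(c,d) \<in> strict_anc par" and o: "c < a" "a < d" "d < b" unfolding P2413_def by blast
    have bd: "(b,d) \<in> strict_anc par" using anc_trans[OF bc cd] .
    have b: "nonM par b" using nonM_ltI[OF ab] o by simp
    have d: "nonM par d" using nonM_ltI[OF anc_trans[OF ab bd]] o by simp
    show False
    proof (cases "mn par b = mn par d")
      case True
      have c: "nonM par c" and mc: "mn par c = mn par b" using sandwich[OF b bc cd True] by auto
      have "d < c" using cI c d cd mc True unfolding condI_def by metis
      then show False using o by simp
    next
      case False
      then have "d < mn par b" using cr b d bd unfolding cross_def by blast
      moreover have "mn par b \<le> a" by (rule mn_le[OF ab])
      ultimately show False using o by simp
    qed
  qed
qed

lemma charB: "avoids par {[1,3,2],[2,3,1,4]} \<longleftrightarrow> condI' par \<and> cross par"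
  unfolding avoids2 I132 I2314
proof (intro iffI conjI)
  assume h: "\<not> P132 par \<and> \<not> P2314 par"
  show "condI' par" unfolding condI'_def
  proof (intro allI impI)
    fix v w assume v: "nonM par v" and w: "nonM par w" and vw: "(v,w) \<in> strict_anc par"
      and e: "mn par v = mn par w"
    show "v < w"
    proof (rule ccontr)
      assume "\<not> v < w"
      then have wv: "w < v" using anc_neq[OF vw] by simp
      have "mn par v < w" using mn_less[OF w] e by simp
      then have "P132 par" unfolding P132_def using nonM_anc'[OF v] vw wv by blast
      then show False using h by blast
    qed
  qed
  show "cross par" unfolding cross_def
  proof (intro allI impI)
    fix v w assume v: "nonM par v" and w: "nonM par w" and vw: "(v,w) \<in> strict_anc par"
      and ne: "mn par v \<noteq> mn par w"
    show "w < mn par v"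
    proof (rule ccontr)
      assume "\<not> w < mn par v"
      moreover have "w \<noteq> mn par v" using anc_neq[OF anc_trans[OF nonM_anc'[OF v] vw]] by simp
      ultimately have mw: "mn par v < w" by simp
      have b1: "(v, mn par w) \<in> strict_anc par" and b2: "mn par w < mn par v"
        using between[OF v w vw ne] by auto
      show False
      proof (cases "w < v")
        case True
        then have "P132 par" unfolding P132_def using nonM_anc'[OF v] mw vw by blast
        then show False using h by blast
      next
        case False
        then have wv: "v < w" using anc_neq[OF vw] by simp
        have "P2314 par" unfolding P2314_def
          using nonM_anc'[OF v] b1 nonM_anc'[OF w] b2 mn_less[OF v] wv by blast
        then show False using h by blast
      qed
    qed
  qed
next
  assume h: "condI' par \<and> cross par"
  then have cI: "condI' par" and cr: "cross par" by auto
  show "\<not> P132 par"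
  proof
    assume "P132 par"
    then obtain a b c where ab: "(a,b) \<in> strict_anc par" and bc: "(b,c) \<in> strict_anc par"
      and o: "a < c" "c < b" unfolding P132_def by blast
    have b: "nonM par b" using nonM_ltI[OF ab] o by simp
    have c: "nonM par c" using nonM_ltI[OF anc_trans[OF ab bc]] o by simp
    show False
    proof (cases "mn par b = mn par c")
      case True
      then have "b < c" using cI b c bc unfolding condI'_def by blast
      then show False using o by simp
    next
      case False
      then have "c < mn par b" using cr b c bc unfolding cross_def by blast
      moreover have "mn par b \<le> a" by (rule mn_le[OF ab])
      ultimately show False using o by simp
    qed
  qed
  show "\<not> P2314 par"
  proof
    assume "P2314 par"
    then obtain a b c d where ab: "(a,b) \<in> strict_anc par" and bc: "(b,c) \<in> strict_anc par"
      and cd: "(c,d) \<in> strict_anc par" and o: "c < a" "a < b" "b < d" unfolding P2314_def by blast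
    have bd: "(b,d) \<in> strict_anc par" using anc_trans[OF bc cd] .
    have b: "nonM par b" using nonM_ltI[OF ab] o by simp
    have d: "nonM par d" using nonM_ltI[OF anc_trans[OF ab bd]] o by simp
    show False
    proof (cases "mn par b = mn par d")
      case True
      have c: "nonM par c" and mc: "mn par c = mn par b" using sandwich[OF b bc cd True] by auto
      have "b < c" using cI b c bc mc unfolding condI'_def by metis
      then show False using o by simp
    next
      case False
      then have "d < mn par b" using cr b d bd unfolding cross_def by blast
      moreover have "mn par b \<le> a" by (rule mn_le[OF ab])
      ultimately show False using o by simp
    qed
  qed
qed

lemma ancB: "(x,y) \<in> strict_anc (PhiB par) \<longleftrightarrow>
   (piC par (mn par) x, piC par (mn par) y) \<in> strict_anc par"
  unfolding PhiB_def by (rule anc_relab)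

lemma nonMB: "nonM (PhiB par) x \<longleftrightarrow> nonM par x"
  unfolding PhiB_def by (rule nonM_relab[OF cgood_mn])

lemma mnB: "nonM par x \<Longrightarrow> mn (PhiB par) x = mn par x"
  unfolding PhiB_def by (rule mn_relab)

lemma transI:
  assumes I: "condI par" shows "condI' (PhiB par)"
  unfolding condI'_def
proof (intro allI impI)
  let ?p = "piC par (mn par)"
  fix v w assume v: "nonM (PhiB par) v" and w: "nonM (PhiB par) w"
    and vw: "(v,w) \<in> strict_anc (PhiB par)" and e: "mn (PhiB par) v = mn (PhiB par) w"
  have v1: "nonM par v" and w1: "nonM par w" using v w nonMB by auto
  have v0: "nonM par (?p v)" "mn par (?p v) = mn par v" using piC_nonM[OF v1] by auto
  have w0: "nonM par (?p w)" "mn par (?p w) = mn par w" using piC_nonM[OF w1] by auto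
  have vw0: "(?p v, ?p w) \<in> strict_anc par" using vw ancB by blast
  have e0: "mn par (?p v) = mn par (?p w)" using e mnB v1 w1 v0 w0 by simp
  have "?p w < ?p v" using I v0(1) w0(1) vw0 e0 unfolding condI_def by blast
  then have "?p (?p v) < ?p (?p w)" using piC_anti[OF w0(1) v0(1)] e0 by simp
  then show "v < w" using piC_inv by simp
qed

lemma transI':
  assumes I: "condI' par" shows "condI (PhiB par)"
  unfolding condI_def
proof (intro allI impI)
  let ?p = "piC par (mn par)"
  fix v w assume v: "nonM (PhiB par) v" and w: "nonM (PhiB par) w"
    and vw: "(v,w) \<in> strict_anc (PhiB par)" and e: "mn (PhiB par) v = mn (PhiB par) w"
  have v1: "nonM par v" and w1: "nonM par w" using v w nonMB by auto
  have v0: "nonM par (?p v)" "mn par (?p v) = mn par v" using piC_nonM[OF v1] by auto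
  have w0: "nonM par (?p w)" "mn par (?p w) = mn par w" using piC_nonM[OF w1] by auto
  have vw0: "(?p v, ?p w) \<in> strict_anc par" using vw ancB by blast
  have e0: "mn par (?p v) = mn par (?p w)" using e mnB v1 w1 v0 w0 by simp
  have "?p v < ?p w" using I v0(1) w0(1) vw0 e0 unfolding condI'_def by blast
  then have "?p (?p w) < ?p (?p v)" using piC_anti[OF v0(1) w0(1)] e0 by simp
  then show "w < v" using piC_inv by simp
qed

lemma transCross:
  assumes X: "cross par" shows "cross (PhiB par)"
  unfolding cross_def
proof (intro allI impI)
  let ?p = "piC par (mn par)"
  fix v w assume v: "nonM (PhiB par) v" and w: "nonM (PhiB par) w"
    and vw: "(v,w) \<in> strict_anc (PhiB par)" and ne: "mn (PhiB par) v \<noteq> mn (PhiB par) w"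
  have v1: "nonM par v" and w1: "nonM par w" using v w nonMB by auto
  have v0: "nonM par (?p v)" "mn par (?p v) = mn par v" using piC_nonM[OF v1] by auto
  have w0: "nonM par (?p w)" "mn par (?p w) = mn par w" using piC_nonM[OF w1] by auto
  have vw0: "(?p v, ?p w) \<in> strict_anc par" using vw ancB by blast
  have ne0: "mn par (?p v) \<noteq> mn par (?p w)" using ne mnB v1 w1 v0 w0 by simp
  have b1: "(?p v, mn par (?p w)) \<in> strict_anc par" using between(1)[OF v0(1) w0(1) vw0 ne0] .
  have "(mn par w, w) \<in> strict_anc par" by (rule nonM_anc'[OF w1])
  then have "(?p v, w) \<in> strict_anc par" using b1 w0(2) anc_trans by simp
  moreover have "mn par (?p v) \<noteq> mn par w" using ne0 w0(2) by simp
  ultimately have "w < mn par (?p v)" using X v0(1) w1 unfolding cross_def by blast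
  then show "w < mn (PhiB par) v" using v0(2) mnB[OF v1] by simp
qed

lemma avoidB1: "avoids par {[1,2,3],[2,4,1,3]} \<Longrightarrow> avoids (PhiB par) {[1,3,2],[2,3,1,4]}"
proof -
  assume a: "avoids par {[1,2,3],[2,4,1,3]}"
  interpret G: frst n "PhiB par" by (rule PhiB_frst)
  have "condI par" "cross par" using a charA by auto
  then have "condI' (PhiB par)" "cross (PhiB par)" using transI transCross by auto
  then show ?thesis using G.charB by blast
qed

lemma avoidB2: "avoids par {[1,3,2],[2,3,1,4]} \<Longrightarrow> avoids (PhiB par) {[1,2,3],[2,4,1,3]}"
proof -
  assume a: "avoids par {[1,3,2],[2,3,1,4]}"
  interpret G: frst n "PhiB par" by (rule PhiB_frst)
  have "condI' par" "cross par" using a charB by auto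
  then have "condI (PhiB par)" "cross (PhiB par)" using transI' transCross by auto
  then show ?thesis using G.charA by blast
qed

end

lemma wilf_by_inv:
  assumes f: "\<And>par. is_forest n par \<Longrightarrow> is_forest n (\<Phi> par)"
    and i: "\<And>par. is_forest n par \<Longrightarrow> \<Phi> (\<Phi> par) = par"
    and a: "\<And>par. is_forest n par \<Longrightarrow> avoids par S \<Longrightarrow> avoids (\<Phi> par) T"
    and b: "\<And>par. is_forest n par \<Longrightarrow> avoids par T \<Longrightarrow> avoids (\<Phi> par) S"
  shows "num_avoiding n S = num_avoiding n T"
proof -
  have "bij_betw \<Phi> {par. is_forest n par \<and> avoids par S} {par. is_forest n par \<and> avoids par T}"
    by (rule bij_betw_byWitness[where f' = \<Phi>]) (use f i a b in auto)
  then show ?thesis unfolding num_avoiding_def by (rule bij_betw_same_card)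
qed

theorem theorem3p4:
  shows "forest_wilf_equiv {[1,2,3], [2,4,1,3]} {[1,3,2], [2,3,1,4]} \<and>
         forest_wilf_equiv {[1,2,3], [3,1,4,2]} {[1,3,2], [3,1,2,4]}"
proof
  show "forest_wilf_equiv {[1,2,3], [2,4,1,3]} {[1,3,2], [2,3,1,4]}"
    unfolding forest_wilf_equiv_def
  proof
    fix n
    show "num_avoiding n {[1,2,3], [2,4,1,3]} = num_avoiding n {[1,3,2], [2,3,1,4]}"
    proof (rule wilf_by_inv[where \<Phi> = PhiB])
      fix par assume "is_forest n par"
      then interpret frst n par by (rule frst.intro)
      show "is_forest n (PhiB par)" using PhiB_frst unfolding frst_def .
      show "PhiB (PhiB par) = par" by (rule PhiB_inv)
      show "avoids par {[1,2,3], [2,4,1,3]} \<Longrightarrow> avoids (PhiB par) {[1,3,2], [2,3,1,4]}"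
        by (rule avoidB1)
      show "avoids par {[1,3,2], [2,3,1,4]} \<Longrightarrow> avoids (PhiB par) {[1,2,3], [2,4,1,3]}"
        by (rule avoidB2)
    qed
  qed
  show "forest_wilf_equiv {[1,2,3], [3,1,4,2]} {[1,3,2], [3,1,2,4]}"
    unfolding forest_wilf_equiv_def
  proof
    fix n
    show "num_avoiding n {[1,2,3], [3,1,4,2]} = num_avoiding n {[1,3,2], [3,1,2,4]}"
    proof (rule wilf_by_inv[where \<Phi> = PhiE])
      fix par assume "is_forest n par"
      then interpret frst n par by (rule frst.intro)
      show "is_forest n (PhiE par)" using PhiE_frst unfolding frst_def .
      show "PhiE (PhiE par) = par" by (rule PhiE_inv)
      show "avoids par {[1,2,3], [3,1,4,2]} \<Longrightarrow> avoids (PhiE par) {[1,3,2], [3,1,2,4]}"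
        by (rule avoidE1)
      show "avoids par {[1,3,2], [3,1,2,4]} \<Longrightarrow> avoids (PhiE par) {[1,2,3], [3,1,4,2]}"
        by (rule avoidE2)
    qed
  qed
qed


end
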